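(* Let $\gamma$ be a locally $K$-Lipschitz-graphical Jordan curve with continuous periodic parametrisation $\gamma:\mathbb{R}\to\mathbb{C}$ and local $K$-Lipschitz-graphical constant $\mu_K$. Let $\varphi:\mathbb{R}\to\mathbb{R}_{\ge0}$ be smooth, supported in $[-1,1]$, with $\int_{\mathbb{R}}\varphi=1$, and $\gamma_\varepsilon(s)=\int_{\mathbb{R}}\frac1\varepsilon\varphi(u/\varepsilon)\gamma(s-u)\,du$. Then for sufficiently small $\varepsilon>0$, $\gamma_\varepsilon$ is a locally $K$-Lipschitz-graphical Jordan curve, and, letting $\mu_{K,\varepsilon}$ be the local $K$-Lipschitz-graphical constant of $\gamma_\varepsilon$, we have $\liminf_{\varepsilon\to0}\mu_{K,\varepsilon}\ge\mu_K$.
   Context: Locally monotone: a Jordan curve with periodic parametrisation $\gamma$ is locally monotone if for every $\theta$ there are an open interval $U_\theta=(\theta_1,\theta_2)\ni\theta$ and a unit vector $v_\theta$ with $g_{v_\theta}(s)=\gamma(s)\cdot v_\theta$ strictly monotone on $U_\theta$. Let $f_{v_\theta}(s)=\gamma(s)\cdot n_\theta$ with $n_\theta$ a unit vector perpendicular to $v_\theta$. $\gamma$ is locally $K$-Lipschitz-graphical if for every $\theta$ there is such a pair $(v_\theta,U_\theta)$ for which moreover $f_{v_\theta}\circ g_{v_\theta}^{-1}$ is $K$-Lipschitz on $g_{v_\theta}(U_\theta)$. For a pair put $\mu(\theta,v_\theta,U_\theta)=\min\{|g_{v_\theta}(\theta)-g_{v_\theta}(\theta_1)|,|g_{v_\theta}(\theta)-g_{v_\theta}(\theta_2)|\}$;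 let $\mu_K(\theta)$ be the maximal (supremal) value of this over all pairs satisfying the $K$-Lipschitz condition, and the local $K$-Lipschitz-graphical constant is $\mu_K=\min_\theta\mu_K(\theta)$ (infimum). *)

theory Defs
  imports "HOL-Analysis.Analysis"
begin

definition jordan_curve :: "(real \<Rightarrow> complex) \<Rightarrow> bool" where
  "jordan_curve \<gamma> \<longleftrightarrow> continuous_on UNIV \<gamma> \<and>
     (\<exists>T>0. (\<forall>s. \<gamma> (s + T) = \<gamma> s) \<and> inj_on \<gamma> {0..<T})"

definition gv :: "(real \<Rightarrow> complex) \<Rightarrow> complex \<Rightarrow> real \<Rightarrow> real" where
  "gv \<gamma> v s = \<gamma> s \<bullet> v"

text \<open>f_v uses the unit normal n = i v (the sign of n is irrelevant for Lipschitz bounds).\<close>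
definition fv :: "(real \<Rightarrow> complex) \<Rightarrow> complex \<Rightarrow> real \<Rightarrow> real" where
  "fv \<gamma> v s = \<gamma> s \<bullet> (\<i> * v)"

definition lg_pair :: "real \<Rightarrow> (real \<Rightarrow> complex) \<Rightarrow> real \<Rightarrow> complex \<Rightarrow> real \<Rightarrow> real \<Rightarrow> bool" where
  "lg_pair K \<gamma> \<theta> v \<theta>1 \<theta>2 \<longleftrightarrow> norm v = 1 \<and> \<theta>1 < \<theta> \<and> \<theta> < \<theta>2 \<and>
     (strict_mono_on {\<theta>1<..<\<theta>2} (gv \<gamma> v) \<or> strict_antimono_on {\<theta>1<..<\<theta>2} (gv \<gamma> v)) \<and>
     lipschitz_on K (gv \<gamma> v ` {\<theta>1<..<\<theta>2}) (fv \<gamma> v \<circ> inv_into {\<theta>1<..<\<theta>2} (gv \<gamma> v))"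

definition locally_lipschitz_graphical :: "real \<Rightarrow> (real \<Rightarrow> complex) \<Rightarrow> bool" where
  "locally_lipschitz_graphical K \<gamma> \<longleftrightarrow> (\<forall>\<theta>. \<exists>v \<theta>1 \<theta>2. lg_pair K \<gamma> \<theta> v \<theta>1 \<theta>2)"

definition mu_pair :: "(real \<Rightarrow> complex) \<Rightarrow> real \<Rightarrow> complex \<Rightarrow> real \<Rightarrow> real \<Rightarrow> real" where
  "mu_pair \<gamma> \<theta> v \<theta>1 \<theta>2 = min \<bar>gv \<gamma> v \<theta> - gv \<gamma> v \<theta>1\<bar> \<bar>gv \<gamma> v \<theta> - gv \<gamma> v \<theta>2\<bar>"

definition mu_K_at :: "real \<Rightarrow> (real \<Rightarrow> complex) \<Rightarrow> real \<Rightarrow> real" where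
  "mu_K_at K \<gamma> \<theta> = Sup {mu_pair \<gamma> \<theta> v \<theta>1 \<theta>2 | v \<theta>1 \<theta>2. lg_pair K \<gamma> \<theta> v \<theta>1 \<theta>2}"

definition mu_K :: "real \<Rightarrow> (real \<Rightarrow> complex) \<Rightarrow> real" where
  "mu_K K \<gamma> = Inf (range (mu_K_at K \<gamma>))"

definition smooth_fun :: "(real \<Rightarrow> real) \<Rightarrow> bool" where
  "smooth_fun \<phi> \<longleftrightarrow> (\<exists>D. D 0 = \<phi> \<and> (\<forall>n x. (D n has_real_derivative D (Suc n) x) (at x)))"

definition mollify :: "(real \<Rightarrow> real) \<Rightarrow> real \<Rightarrow> (real \<Rightarrow> complex) \<Rightarrow> real \<Rightarrow> complex" where
  "mollify \<phi> \<epsilon> \<gamma> s = integral UNIV (\<lambda>u. complex_of_real (\<phi> (u / \<epsilon>) / \<epsilon>) * \<gamma> (s - u))"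

end

theory Submission
  imports Defs "HOL-Library.Liminf_Limsup"
begin


definition mol :: "(real \<Rightarrow> real) \<Rightarrow> real \<Rightarrow> (real \<Rightarrow> 'a::banach) \<Rightarrow> real \<Rightarrow> 'a" where
  "mol \<phi> \<epsilon> h s = integral {-\<epsilon>..\<epsilon>} (\<lambda>u. (\<phi> (u/\<epsilon>)/\<epsilon>) *\<^sub>R h (s - u))"

context
  fixes \<phi> :: "real \<Rightarrow> real"
  assumes phc: "continuous_on UNIV \<phi>"
    and phpos: "\<And>u. \<phi> u \<ge> 0"
    and phsupp: "\<And>u. \<bar>u\<bar> > 1 \<Longrightarrow> \<phi> u = 0"
    and phint: "(\<phi> has_integral 1) UNIV"
begin

lemma ph_int11: "(\<phi> has_integral 1) {-1..1}"
proof -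
  have "\<phi> integrable_on {-1..1}"
    by (rule integrable_continuous_interval) (auto intro: continuous_on_subset[OF phc])
  then obtain i where i: "(\<phi> has_integral i) {-1..1}" by auto
  have "(\<phi> has_integral i) UNIV"
    by (rule has_integral_on_superset[OF i]) (auto intro!: phsupp)
  with phint have "i = 1" using has_integral_unique by blast
  with i show ?thesis by simp
qed

lemma w_cont: "continuous_on S (\<lambda>u. \<phi> (u/\<epsilon>)/\<epsilon>)"
proof -
  have e: "(\<lambda>u. u/\<epsilon>) = (\<lambda>u. u * inverse \<epsilon>)" by (simp add: divide_inverse)
  have "continuous_on S (\<lambda>u. u/\<epsilon>)" unfolding e by (intro continuous_intros)
  then have "continuous_on S (\<lambda>u. \<phi> (u/\<epsilon>))"
    by (rule continuous_on_compose2[OF phc]) auto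
  from continuous_on_mult_right[OF this, of "inverse \<epsilon>"] show ?thesis
    by (simp add: divide_inverse)
qed

lemma w_nonneg: "\<epsilon> > 0 \<Longrightarrow> \<phi> (u/\<epsilon>)/\<epsilon> \<ge> 0"
  using phpos by simp

lemma w_int: assumes "\<epsilon> > 0" shows "((\<lambda>u. \<phi> (u/\<epsilon>)/\<epsilon>) has_integral 1) {-\<epsilon>..\<epsilon>}"
proof -
  have "((\<lambda>x. \<phi> ((1/\<epsilon>) * x)) has_integral (1 / \<bar>1/\<epsilon>\<bar>) *\<^sub>R 1) ((\<lambda>x. x / (1/\<epsilon>)) ` {-1..1})"
    by (rule has_integral_stretch_real[OF ph_int11]) (use assms in auto)
  moreover have "(\<lambda>x. x / (1/\<epsilon>)) ` {-1..1} = {-\<epsilon>..\<epsilon>}"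
  proof -
    have e: "(\<lambda>x. x / (1/\<epsilon>)) = (\<lambda>x. \<epsilon> * x)" by (rule ext) simp
    show ?thesis unfolding e using assms by (simp add: image_mult_atLeastAtMost_if)
  qed
  ultimately have "((\<lambda>x. \<phi> (x/\<epsilon>)) has_integral \<epsilon>) {-\<epsilon>..\<epsilon>}" using assms by simp
  then have "((\<lambda>x. \<phi> (x/\<epsilon>) / \<epsilon>) has_integral \<epsilon> / \<epsilon>) {-\<epsilon>..\<epsilon>}"
    by (rule has_integral_divide)
  then show ?thesis using assms by simp
qed

lemma aux1: "0 \<le> (W::real) \<Longrightarrow> norm x \<le> e \<Longrightarrow> norm (W *\<^sub>R x) \<le> W * e"
  by (simp add: mult_left_mono)
lemma aux2: "0 \<le> (W::real) \<Longrightarrow> m \<le> x \<Longrightarrow> W * m \<le> W *\<^sub>R (x::real)"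
  by (simp add: mult_left_mono)
lemma aux3: "0 \<le> (W::real) \<Longrightarrow> \<bar>a\<bar> \<le> K * b \<Longrightarrow> norm (W *\<^sub>R (a::real)) \<le> K * (W *\<^sub>R b)"
  by (metis abs_mult abs_of_nonneg mult.left_commute mult_left_mono real_norm_def real_scaleR_def)

lemma mol_integrable:
  fixes h :: "real \<Rightarrow> 'a::banach"
  assumes "continuous_on UNIV h"
  shows "(\<lambda>u. (\<phi> (u/\<epsilon>)/\<epsilon>) *\<^sub>R h (s - u)) integrable_on {-\<epsilon>..\<epsilon>}"
proof -
  have "continuous_on {-\<epsilon>..\<epsilon>} (\<lambda>u. h (s - u))"
    by (rule continuous_on_compose2[OF assms]) (auto intro: continuous_intros)
  then show ?thesis
    by (intro integrable_continuous_interval continuous_intros w_cont)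
qed

lemma mol_const: assumes "\<epsilon> > 0" shows "mol \<phi> \<epsilon> (\<lambda>_. c) s = c"
proof -
  have "((\<lambda>u. (\<phi> (u/\<epsilon>)/\<epsilon>) *\<^sub>R c) has_integral 1 *\<^sub>R c) {-\<epsilon>..\<epsilon>}"
    by (rule has_integral_scaleR_left[OF w_int[OF assms]])
  then show ?thesis unfolding mol_def by (simp add: integral_unique)
qed

lemma mol_diff:
  fixes h1 h2 :: "real \<Rightarrow> 'a::banach"
  assumes "continuous_on UNIV h1" "continuous_on UNIV h2"
  shows "mol \<phi> \<epsilon> h1 s - mol \<phi> \<epsilon> h2 t =
     integral {-\<epsilon>..\<epsilon>} (\<lambda>u. (\<phi> (u/\<epsilon>)/\<epsilon>) *\<^sub>R (h1 (s - u) - h2 (t - u)))"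
  unfolding mol_def scaleR_diff_right
  by (rule integral_diff[symmetric]; rule mol_integrable; fact)

lemma mol_bound:
  fixes h1 h2 :: "real \<Rightarrow> 'a::banach"
  assumes "\<epsilon> > 0" "continuous_on UNIV h1" "continuous_on UNIV h2"
    and le: "\<And>u. u \<in> {-\<epsilon>..\<epsilon>} \<Longrightarrow> norm (h1 (s - u) - h2 (t - u)) \<le> e"
  shows "norm (mol \<phi> \<epsilon> h1 s - mol \<phi> \<epsilon> h2 t) \<le> e"
proof -
  have i1: "(\<lambda>u. (\<phi> (u/\<epsilon>)/\<epsilon>) *\<^sub>R (h1 (s - u) - h2 (t - u))) integrable_on {-\<epsilon>..\<epsilon>}"
    unfolding scaleR_diff_right
    by (intro integrable_diff mol_integrable assms)
  have i2: "((\<lambda>u. (\<phi> (u/\<epsilon>)/\<epsilon>) * e) has_integral 1 * e) {-\<epsilon>..\<epsilon>}"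
    by (rule has_integral_mult_left[OF w_int[OF assms(1)]])
  have "norm (integral {-\<epsilon>..\<epsilon>} (\<lambda>u. (\<phi> (u/\<epsilon>)/\<epsilon>) *\<^sub>R (h1 (s - u) - h2 (t - u))))
      \<le> integral {-\<epsilon>..\<epsilon>} (\<lambda>u. (\<phi> (u/\<epsilon>)/\<epsilon>) * e)"
  proof (rule integral_norm_bound_integral[OF i1])
    show "(\<lambda>u. \<phi> (u / \<epsilon>) / \<epsilon> * e) integrable_on {- \<epsilon>..\<epsilon>}" using i2 by blast
    fix u assume u: "u \<in> {-\<epsilon>..\<epsilon>}"
    show "norm ((\<phi> (u/\<epsilon>)/\<epsilon>) *\<^sub>R (h1 (s - u) - h2 (t - u))) \<le> (\<phi> (u/\<epsilon>)/\<epsilon>) * e"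
      using aux1[OF w_nonneg[OF assms(1), of u] le[OF u]] .
  qed
  also have "\<dots> = e" using integral_unique[OF i2] by (simp only: mult_1)
  finally show ?thesis unfolding mol_diff[OF assms(2,3)] .
qed

lemma mol_lower:
  fixes h1 h2 :: "real \<Rightarrow> real"
  assumes "\<epsilon> > 0" "continuous_on UNIV h1" "continuous_on UNIV h2"
    and le: "\<And>u. u \<in> {-\<epsilon>..\<epsilon>} \<Longrightarrow> m \<le> h1 (s - u) - h2 (t - u)"
  shows "m \<le> mol \<phi> \<epsilon> h1 s - mol \<phi> \<epsilon> h2 t"
proof -
  have i1: "(\<lambda>u. (\<phi> (u/\<epsilon>)/\<epsilon>) *\<^sub>R (h1 (s - u) - h2 (t - u))) integrable_on {-\<epsilon>..\<epsilon>}"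
    unfolding scaleR_diff_right
    by (intro integrable_diff mol_integrable assms)
  have i2: "((\<lambda>u. (\<phi> (u/\<epsilon>)/\<epsilon>) * m) has_integral 1 * m) {-\<epsilon>..\<epsilon>}"
    by (rule has_integral_mult_left[OF w_int[OF assms(1)]])
  have "integral {-\<epsilon>..\<epsilon>} (\<lambda>u. (\<phi> (u/\<epsilon>)/\<epsilon>) * m)
      \<le> integral {-\<epsilon>..\<epsilon>} (\<lambda>u. (\<phi> (u/\<epsilon>)/\<epsilon>) *\<^sub>R (h1 (s - u) - h2 (t - u)))"
  proof (rule integral_le[OF _ i1])
    show "(\<lambda>u. \<phi> (u / \<epsilon>) / \<epsilon> * m) integrable_on {- \<epsilon>..\<epsilon>}" using i2 by blast
    fix u assume u: "u \<in> {-\<epsilon>..\<epsilon>}"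
    show "(\<phi> (u/\<epsilon>)/\<epsilon>) * m \<le> (\<phi> (u/\<epsilon>)/\<epsilon>) *\<^sub>R (h1 (s - u) - h2 (t - u))"
      using aux2[OF w_nonneg[OF assms(1), of u] le[OF u]] .
  qed
  moreover have "integral {-\<epsilon>..\<epsilon>} (\<lambda>u. (\<phi> (u/\<epsilon>)/\<epsilon>) * m) = m"
    using integral_unique[OF i2] by (simp only: mult_1)
  ultimately show ?thesis unfolding mol_diff[OF assms(2,3)] by simp
qed

lemma mol_lip:
  fixes f g :: "real \<Rightarrow> real"
  assumes "\<epsilon> > 0" "continuous_on UNIV f" "continuous_on UNIV g"
    and le: "\<And>u. u \<in> {-\<epsilon>..\<epsilon>} \<Longrightarrow> \<bar>f (s - u) - f (t - u)\<bar> \<le> K * (g (t - u) - g (s - u))"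
  shows "\<bar>mol \<phi> \<epsilon> f s - mol \<phi> \<epsilon> f t\<bar> \<le> K * (mol \<phi> \<epsilon> g t - mol \<phi> \<epsilon> g s)"
proof -
  have i1: "(\<lambda>u. (\<phi> (u/\<epsilon>)/\<epsilon>) *\<^sub>R (f (s - u) - f (t - u))) integrable_on {-\<epsilon>..\<epsilon>}"
    unfolding scaleR_diff_right
    by (intro integrable_diff mol_integrable assms)
  have i2: "(\<lambda>u. (\<phi> (u/\<epsilon>)/\<epsilon>) *\<^sub>R (g (t - u) - g (s - u))) integrable_on {-\<epsilon>..\<epsilon>}"
    unfolding scaleR_diff_right
    by (intro integrable_diff mol_integrable assms)
  have "norm (integral {-\<epsilon>..\<epsilon>} (\<lambda>u. (\<phi> (u/\<epsilon>)/\<epsilon>) *\<^sub>R (f (s - u) - f (t - u))))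
      \<le> integral {-\<epsilon>..\<epsilon>} (\<lambda>u. K * ((\<phi> (u/\<epsilon>)/\<epsilon>) *\<^sub>R (g (t - u) - g (s - u))))"
  proof (rule integral_norm_bound_integral[OF i1])
    show "(\<lambda>u. K * ((\<phi> (u/\<epsilon>)/\<epsilon>) *\<^sub>R (g (t - u) - g (s - u)))) integrable_on {- \<epsilon>..\<epsilon>}"
      using i2 by (rule integrable_on_mult_right)
    fix u assume u: "u \<in> {-\<epsilon>..\<epsilon>}"
    show "norm ((\<phi> (u/\<epsilon>)/\<epsilon>) *\<^sub>R (f (s - u) - f (t - u))) \<le> K * ((\<phi> (u/\<epsilon>)/\<epsilon>) *\<^sub>R (g (t - u) - g (s - u)))"
      using aux3[OF w_nonneg[OF assms(1), of u] le[OF u]] .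
  qed
  also have "\<dots> = K * (mol \<phi> \<epsilon> g t - mol \<phi> \<epsilon> g s)"
    using mol_diff[OF assms(3,3), of \<epsilon> t s] by simp
  finally show ?thesis using mol_diff[OF assms(2,2), of \<epsilon> s t] by simp
qed

lemma mol_inner:
  fixes h :: "real \<Rightarrow> 'a::{banach,real_inner}"
  assumes "continuous_on UNIV h"
  shows "mol \<phi> \<epsilon> h s \<bullet> v = mol \<phi> \<epsilon> (\<lambda>x. h x \<bullet> v) s"
proof -
  have "integral {-\<epsilon>..\<epsilon>} ((\<lambda>z. z \<bullet> v) \<circ> (\<lambda>u. (\<phi> (u/\<epsilon>)/\<epsilon>) *\<^sub>R h (s - u)))
     = integral {-\<epsilon>..\<epsilon>} (\<lambda>u. (\<phi> (u/\<epsilon>)/\<epsilon>) *\<^sub>R h (s - u)) \<bullet> v"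
    by (rule integral_linear[OF mol_integrable[OF assms] bounded_linear_inner_left])
  then show ?thesis unfolding mol_def by (simp add: o_def)
qed

lemma mollify_mol:
  assumes "\<epsilon> > 0" "continuous_on UNIV \<gamma>"
  shows "mollify \<phi> \<epsilon> \<gamma> s = mol \<phi> \<epsilon> \<gamma> s"
proof -
  obtain i where i: "((\<lambda>u. (\<phi> (u/\<epsilon>)/\<epsilon>) *\<^sub>R \<gamma> (s - u)) has_integral i) {-\<epsilon>..\<epsilon>}"
    using mol_integrable[OF assms(2)] by blast
  have "((\<lambda>u. (\<phi> (u/\<epsilon>)/\<epsilon>) *\<^sub>R \<gamma> (s - u)) has_integral i) UNIV"
  proof (rule has_integral_on_superset[OF i])
    fix u assume "u \<notin> {-\<epsilon>..\<epsilon>}"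
    then have "\<bar>u/\<epsilon>\<bar> > 1" using assms(1) by (auto simp: abs_if field_simps)
    then show "(\<phi> (u/\<epsilon>)/\<epsilon>) *\<^sub>R \<gamma> (s - u) = 0" using phsupp by simp
  qed auto
  moreover have eq: "(\<lambda>u. complex_of_real (\<phi> (u/\<epsilon>)/\<epsilon>) * \<gamma> (s-u)) = (\<lambda>u. (\<phi> (u/\<epsilon>)/\<epsilon>) *\<^sub>R \<gamma> (s-u))"
    by (simp add: scaleR_conv_of_real)
  ultimately show ?thesis unfolding mollify_def mol_def eq using i
    by (metis integral_unique)
qed

end


lemma periodic_int:
  fixes T :: real
  assumes "\<And>s. g (s + T) = g s"
  shows "g (s + of_int k * T) = g s"
proof (induction k arbitrary: s rule: int_induct[where k=0])
  case base then show ?case by simp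
next
  case (step1 i) then show ?case using assms[of "s + of_int i * T"] by (simp add: algebra_simps)
next
  case (step2 i)
  have "g (s + of_int (i - 1) * T) = g (s + of_int (i-1) * T + T)" using assms by simp
  also have "\<dots> = g (s + of_int i * T)" by (simp add: algebra_simps)
  finally show ?case using step2 by simp
qed

lemma periodic_reduce:
  assumes "T > (0::real)"
  obtains k s' where "s = s' + of_int k * T" "0 \<le> s'" "s' < T"
proof -
  let ?k = "\<lfloor>s / T\<rfloor>"
  have "of_int ?k * T \<le> s" "s < (of_int ?k + 1) * T"
    using floor_divide_lower[OF assms] floor_divide_upper[OF assms] by auto
  then show ?thesis using that[of "s - of_int ?k * T" ?k] by (auto simp: algebra_simps)
qed

lemma periodic_range:
  fixes T :: real
  assumes "T > 0" "\<And>s. g (s + T) = g s"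
  shows "range g = g ` {0..T}"
proof
  show "range g \<subseteq> g ` {0..T}"
  proof
    fix y assume "y \<in> range g"
    then obtain s where y: "y = g s" by auto
    obtain k s' where "s = s' + of_int k * T" "0 \<le> s'" "s' < T" using periodic_reduce[OF assms(1)] .
    then show "y \<in> g ` {0..T}" using y periodic_int[of g T, OF assms(2)] by auto
  qed
qed auto

lemma periodic_bounded:
  fixes g :: "real \<Rightarrow> 'a::metric_space"
  assumes "continuous_on UNIV g" "T > 0" "\<And>s. g (s + T) = g s"
  shows "bounded (range g)"
  unfolding periodic_range[of T g, OF assms(2,3)]
  by (intro compact_imp_bounded compact_continuous_image continuous_on_subset[OF assms(1)]) auto

lemma periodic_ucont:
  fixes g :: "real \<Rightarrow> 'a::metric_space"
  assumes "continuous_on UNIV g" "T > 0" "\<And>s. g (s + T) = g s"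
  shows "uniformly_continuous_on UNIV g"
proof -
  have "uniformly_continuous_on {-T..2*T} g"
    by (intro compact_uniformly_continuous continuous_on_subset[OF assms(1)]) auto
  show ?thesis unfolding uniformly_continuous_on_def
  proof (intro allI impI)
    fix e :: real assume "e > 0"
    then obtain d where d: "d > 0" "\<And>x y. x \<in> {-T..2*T} \<Longrightarrow> y \<in> {-T..2*T} \<Longrightarrow> dist y x < d \<Longrightarrow> dist (g y) (g x) < e"
      using \<open>uniformly_continuous_on {-T..2*T} g\<close> unfolding uniformly_continuous_on_def by metis
    show "\<exists>d>0. \<forall>x\<in>UNIV. \<forall>x'\<in>UNIV. dist x' x < d \<longrightarrow> dist (g x') (g x) < e"
    proof (intro exI[of _ "min d T"] conjI ballI impI)
      fix x y :: real assume xy: "dist y x < min d T"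
      obtain k x' where x': "x = x' + of_int k * T" "0 \<le> x'" "x' < T" using periodic_reduce[OF assms(2)] .
      define y' where "y' = y - of_int k * T"
      have gy: "g y = g y'" using periodic_int[of g T, OF assms(3), of y' k] by (simp add: y'_def)
      have gx: "g x = g x'" using periodic_int[of g T, OF assms(3), of x' k] x' by simp
      have "y' - x' = y - x" using x' by (simp add: y'_def)
      then have "dist y' x' < min d T" using xy by (simp add: dist_real_def)
      then have "y' \<in> {-T..2*T}" using x' by (auto simp: dist_real_def)
      then show "dist (g y) (g x) < e" unfolding gx gy
        using d(2)[of x' y'] x' \<open>dist y' x' < min d T\<close> by auto
    qed (use d assms in auto)
  qed
qed

lemma lg_pair_D:
  assumes "lg_pair K g \<theta> v a b"
  shows "norm v = 1" "a < \<theta>" "\<theta> < b" "0 \<le> K"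
    "strict_mono_on {a<..<b} (gv g v) \<or> strict_antimono_on {a<..<b} (gv g v)"
    "\<And>s t. s \<in> {a<..<b} \<Longrightarrow> t \<in> {a<..<b} \<Longrightarrow> \<bar>fv g v s - fv g v t\<bar> \<le> K * \<bar>gv g v s - gv g v t\<bar>"
proof -
  let ?I = "{a<..<b}"
  note A = assms[unfolded lg_pair_def]
  show "norm v = 1" "a < \<theta>" "\<theta> < b" "strict_mono_on ?I (gv g v) \<or> strict_antimono_on ?I (gv g v)"
    using A by auto
  have inj: "inj_on (gv g v) ?I"
    using A strict_mono_on_imp_inj_on strict_antimono_iff_antimono by blast
  have L: "lipschitz_on K (gv g v ` ?I) (fv g v \<circ> inv_into ?I (gv g v))" using A by auto
  then show "0 \<le> K" unfolding lipschitz_on_def by auto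
  fix s t assume st: "s \<in> ?I" "t \<in> ?I"
  have "dist ((fv g v \<circ> inv_into ?I (gv g v)) (gv g v s)) ((fv g v \<circ> inv_into ?I (gv g v)) (gv g v t))
     \<le> K * dist (gv g v s) (gv g v t)"
    using L st unfolding lipschitz_on_def by auto
  then show "\<bar>fv g v s - fv g v t\<bar> \<le> K * \<bar>gv g v s - gv g v t\<bar>"
    using inv_into_f_f[OF inj st(1)] inv_into_f_f[OF inj st(2)] by (simp add: dist_real_def)
qed

lemma lg_pair_I:
  assumes "norm v = 1" "a < \<theta>" "\<theta> < b" "0 \<le> K"
    "strict_mono_on {a<..<b} (gv g v)"
    "\<And>s t. s \<in> {a<..<b} \<Longrightarrow> t \<in> {a<..<b} \<Longrightarrow> \<bar>fv g v s - fv g v t\<bar> \<le> K * \<bar>gv g v s - gv g v t\<bar>"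
  shows "lg_pair K g \<theta> v a b"
proof -
  let ?I = "{a<..<b}"
  have inj: "inj_on (gv g v) ?I" using assms(5) strict_mono_on_imp_inj_on by blast
  have "lipschitz_on K (gv g v ` ?I) (fv g v \<circ> inv_into ?I (gv g v))"
    unfolding lipschitz_on_def
  proof (intro conjI ballI)
    fix x y assume "x \<in> gv g v ` ?I" "y \<in> gv g v ` ?I"
    then obtain s t where st: "s \<in> ?I" "t \<in> ?I" "x = gv g v s" "y = gv g v t" by auto
    show "dist ((fv g v \<circ> inv_into ?I (gv g v)) x) ((fv g v \<circ> inv_into ?I (gv g v)) y) \<le> K * dist x y"
      using assms(6)[OF st(1,2)] st inv_into_f_f[OF inj st(1)] inv_into_f_f[OF inj st(2)]
      by (simp add: dist_real_def)
  qed (use assms in auto)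
  then show ?thesis using assms unfolding lg_pair_def by auto
qed

lemma lg_pair_flip:
  assumes "lg_pair K g \<theta> v a b"
  obtains v' where "lg_pair K g \<theta> v' a b" "strict_mono_on {a<..<b} (gv g v')"
    "mu_pair g \<theta> v' a b = mu_pair g \<theta> v a b"
proof (cases "strict_mono_on {a<..<b} (gv g v)")
  case True then show ?thesis using that assms by blast
next
  case False
  then have am: "strict_antimono_on {a<..<b} (gv g v)" using lg_pair_D(5)[OF assms] by blast
  have gm: "gv g (-v) = (\<lambda>s. - gv g v s)" by (auto simp: gv_def)
  have fm: "fv g (-v) = (\<lambda>s. - fv g v s)" by (auto simp: fv_def)
  have sm: "strict_mono_on {a<..<b} (gv g (-v))"
    using am unfolding gm monotone_on_def by auto
  have "lg_pair K g \<theta> (-v) a b"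
    by (rule lg_pair_I) (use lg_pair_D[OF assms] sm in \<open>auto simp: gm fm abs_minus_commute\<close>)
  moreover have "mu_pair g \<theta> (-v) a b = mu_pair g \<theta> v a b"
    unfolding mu_pair_def gm by (simp add: abs_minus_commute)
  ultimately show ?thesis using that sm by blast
qed

lemma lg_pair_shift:
  assumes "lg_pair K g \<theta> v a b" "strict_mono_on {a<..<b} (gv g v)" "\<And>s. g (s + c) = g s"
  shows "lg_pair K g (\<theta> + c) v (a + c) (b + c)" "strict_mono_on {a+c<..<b+c} (gv g v)"
    "mu_pair g (\<theta> + c) v (a + c) (b + c) = mu_pair g \<theta> v a b"
proof -
  have gs: "gv g v (s + c) = gv g v s" for s using assms(3) by (simp add: gv_def)
  have fs: "fv g v (s + c) = fv g v s" for s using assms(3) by (simp add: fv_def)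
  have gs': "gv g v s = gv g v (s - c)" for s using gs[of "s - c"] by simp
  have fs': "fv g v s = fv g v (s - c)" for s using fs[of "s - c"] by simp
  show sm: "strict_mono_on {a+c<..<b+c} (gv g v)"
    unfolding monotone_on_def
  proof (intro ballI impI)
    fix x y assume "x \<in> {a+c<..<b+c}" "y \<in> {a+c<..<b+c}" "x < y"
    then have "x - c \<in> {a<..<b}" "y - c \<in> {a<..<b}" "x - c < y - c" by auto
    then show "gv g v x < gv g v y" using assms(2) unfolding monotone_on_def gs'[of x] gs'[of y] by blast
  qed
  show "lg_pair K g (\<theta> + c) v (a + c) (b + c)"
  proof (rule lg_pair_I)
    fix s t assume "s \<in> {a+c<..<b+c}" "t \<in> {a+c<..<b+c}"
    then have "s - c \<in> {a<..<b}" "t - c \<in> {a<..<b}" by auto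
    from lg_pair_D(6)[OF assms(1) this] show "\<bar>fv g v s - fv g v t\<bar> \<le> K * \<bar>gv g v s - gv g v t\<bar>"
      by (metis fs' gs')
  qed (use lg_pair_D[OF assms(1)] sm in auto)
  show "mu_pair g (\<theta> + c) v (a + c) (b + c) = mu_pair g \<theta> v a b"
    unfolding mu_pair_def gs ..
qed

lemma mu_pair_nonneg: "mu_pair g \<theta> v a b \<ge> 0"
  unfolding mu_pair_def by simp

lemma mu_bdd:
  assumes "bounded (range g)"
  shows "bdd_above {mu_pair g \<theta> v a b | v a b. lg_pair K g \<theta> v a b}"
proof -
  obtain B where B: "\<And>s. norm (g s) \<le> B" using assms unfolding bounded_iff by auto
  have "mu_pair g \<theta> v a b \<le> 2 * B" if "lg_pair K g \<theta> v a b" for v a b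
  proof -
    have nv: "norm v = 1" using lg_pair_D(1)[OF that] .
    have "\<bar>gv g v s\<bar> \<le> B" for s
      using Cauchy_Schwarz_ineq2[of "g s" v] nv B[of s] unfolding gv_def by simp
    then have "\<bar>gv g v \<theta>\<bar> \<le> B" "\<bar>gv g v a\<bar> \<le> B" by auto
    then have "\<bar>gv g v \<theta> - gv g v a\<bar> \<le> 2 * B" by linarith
    then show ?thesis unfolding mu_pair_def by simp
  qed
  then show ?thesis unfolding bdd_above_def by blast
qed



locale moll =
  fixes \<phi> :: "real \<Rightarrow> real" and \<gamma> :: "real \<Rightarrow> complex" and T K :: real
  assumes phc: "continuous_on UNIV \<phi>"
    and phpos: "\<And>u. \<phi> u \<ge> 0"
    and phsupp: "\<And>u. \<bar>u\<bar> > 1 \<Longrightarrow> \<phi> u = 0"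
    and phint: "(\<phi> has_integral 1) UNIV"
    and gc: "continuous_on UNIV \<gamma>"
    and Tpos: "T > 0"
    and gper: "\<And>s. \<gamma> (s + T) = \<gamma> s"
    and ginj: "inj_on \<gamma> {0..<T}"
    and glg: "locally_lipschitz_graphical K \<gamma>"

context moll
begin

lemma gv_cont: "continuous_on UNIV (gv \<gamma> v)"
  unfolding gv_def by (intro continuous_intros gc)

lemma fv_cont: "continuous_on UNIV (fv \<gamma> v)"
  unfolding fv_def by (intro continuous_intros gc)

lemma Gam_eq: "\<epsilon> > 0 \<Longrightarrow> mollify \<phi> \<epsilon> \<gamma> s = mol \<phi> \<epsilon> \<gamma> s"
  by (rule mollify_mol[OF phc phpos phsupp phint _ gc])

lemma gv_Gam: "\<epsilon> > 0 \<Longrightarrow> gv (mollify \<phi> \<epsilon> \<gamma>) v s = mol \<phi> \<epsilon> (gv \<gamma> v) s"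
  unfolding gv_def Gam_eq[of \<epsilon>] using mol_inner[OF phc phpos phsupp phint gc]
  by (simp add: gv_def[symmetric])

lemma fv_Gam: "\<epsilon> > 0 \<Longrightarrow> fv (mollify \<phi> \<epsilon> \<gamma>) v s = mol \<phi> \<epsilon> (fv \<gamma> v) s"
proof -
  assume e: "\<epsilon> > 0"
  have 1: "fv (mollify \<phi> \<epsilon> \<gamma>) v s = mol \<phi> \<epsilon> \<gamma> s \<bullet> (\<i> * v)" by (simp add: fv_def Gam_eq[OF e])
  have 2: "fv \<gamma> v = (\<lambda>x. \<gamma> x \<bullet> (\<i> * v))" by (rule ext) (simp add: fv_def)
  show ?thesis unfolding 1 2 by (rule mol_inner[OF phc phpos phsupp phint gc])
qed

lemma Gam_per: "\<epsilon> > 0 \<Longrightarrow> mollify \<phi> \<epsilon> \<gamma> (s + T) = mollify \<phi> \<epsilon> \<gamma> s"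
proof -
  assume e: "\<epsilon> > 0"
  have "\<gamma> (s + T - u) = \<gamma> (s - u)" for u using gper[of "s - u"] by (simp add: algebra_simps)
  then show ?thesis unfolding Gam_eq[OF e] mol_def by simp
qed

lemma g_uc: "uniformly_continuous_on UNIV \<gamma>"
  by (rule periodic_ucont[OF gc Tpos gper])

lemma g_uc':
  assumes "e > 0" obtains d where "d > 0" "\<And>x y. \<bar>x - y\<bar> < d \<Longrightarrow> norm (\<gamma> x - \<gamma> y) < e"
proof -
  from g_uc[unfolded uniformly_continuous_on_def dist_norm real_norm_def] assms obtain d where
    "d > 0" "\<forall>x\<in>UNIV. \<forall>x'\<in>UNIV. \<bar>x' - x\<bar> < d \<longrightarrow> norm (\<gamma> x' - \<gamma> x) < e" by blast
  then show ?thesis using that by auto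
qed

lemma Gam_close:
  assumes "e > 0"
  obtains d where "d > 0" "\<And>\<epsilon> s. 0 < \<epsilon> \<Longrightarrow> \<epsilon> < d \<Longrightarrow> norm (mollify \<phi> \<epsilon> \<gamma> s - \<gamma> s) \<le> e"
proof -
  obtain d where d: "d > 0" "\<And>x y. \<bar>x - y\<bar> < d \<Longrightarrow> norm (\<gamma> x - \<gamma> y) < e" using g_uc' assms by blast
  have "norm (mollify \<phi> \<epsilon> \<gamma> s - \<gamma> s) \<le> e" if "0 < \<epsilon>" "\<epsilon> < d" for \<epsilon> s
  proof -
    have "norm (mol \<phi> \<epsilon> \<gamma> s - mol \<phi> \<epsilon> (\<lambda>_. \<gamma> s) s) \<le> e"
    proof (rule mol_bound[OF phc phpos phsupp phint that(1) gc])
      show "continuous_on UNIV (\<lambda>_. \<gamma> s)" by simp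
      fix u assume "u \<in> {-\<epsilon>..\<epsilon>}"
      then have "\<bar>(s - u) - s\<bar> < d" using that by auto
      then show "norm (\<gamma> (s - u) - \<gamma> s) \<le> e" using d(2) by fastforce
    qed
    moreover have c: "mol \<phi> \<epsilon> (\<lambda>_. \<gamma> s) s = \<gamma> s" by (rule mol_const[OF phc phpos phsupp phint that(1)])
    ultimately show ?thesis unfolding Gam_eq[OF that(1)] by simp
  qed
  then show ?thesis using that d by blast
qed

lemma Gam_uc:
  assumes "e > 0"
  obtains d where "d > 0" "\<And>\<epsilon> x y. 0 < \<epsilon> \<Longrightarrow> \<bar>x - y\<bar> < d \<Longrightarrow> norm (mollify \<phi> \<epsilon> \<gamma> x - mollify \<phi> \<epsilon> \<gamma> y) \<le> e"
proof -
  obtain d where d: "d > 0" "\<And>x y. \<bar>x - y\<bar> < d \<Longrightarrow> norm (\<gamma> x - \<gamma> y) < e" using g_uc' assms by blast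
  have "norm (mollify \<phi> \<epsilon> \<gamma> x - mollify \<phi> \<epsilon> \<gamma> y) \<le> e" if "0 < \<epsilon>" "\<bar>x - y\<bar> < d" for \<epsilon> x y
  proof -
    have "norm (mol \<phi> \<epsilon> \<gamma> x - mol \<phi> \<epsilon> \<gamma> y) \<le> e"
    proof (rule mol_bound[OF phc phpos phsupp phint that(1) gc gc])
      fix u
      have "\<bar>(x - u) - (y - u)\<bar> < d" using that by auto
      then show "norm (\<gamma> (x - u) - \<gamma> (y - u)) \<le> e" using d(2) by fastforce
    qed
    then show ?thesis using Gam_eq[OF that(1)] by simp
  qed
  then show ?thesis using that d by blast
qed

lemma Gam_cont: "\<epsilon> > 0 \<Longrightarrow> continuous_on UNIV (mollify \<phi> \<epsilon> \<gamma>)"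
proof -
  assume e: "\<epsilon> > 0"
  have "uniformly_continuous_on UNIV (mollify \<phi> \<epsilon> \<gamma>)"
    unfolding uniformly_continuous_on_def
  proof (intro allI impI)
    fix e :: real assume "e > 0"
    then have "e/2 > 0" by simp
    then obtain d where d: "d > 0" "\<And>\<epsilon> x y. 0 < \<epsilon> \<Longrightarrow> \<bar>x - y\<bar> < d \<Longrightarrow> norm (mollify \<phi> \<epsilon> \<gamma> x - mollify \<phi> \<epsilon> \<gamma> y) \<le> e/2"
      using Gam_uc by blast
    show "\<exists>d>0. \<forall>x\<in>UNIV. \<forall>x'\<in>UNIV. dist x' x < d \<longrightarrow> dist (mollify \<phi> \<epsilon> \<gamma> x') (mollify \<phi> \<epsilon> \<gamma> x) < e"
      using d e \<open>e > 0\<close> by (intro exI[of _ d]) (force simp: dist_norm)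
  qed
  then show ?thesis by (rule uniformly_continuous_imp_continuous)
qed

lemma Gam_bounded: "\<epsilon> > 0 \<Longrightarrow> bounded (range (mollify \<phi> \<epsilon> \<gamma>))"
  by (rule periodic_bounded[OF Gam_cont Tpos Gam_per])

lemma mol_smono:
  fixes g :: "real \<Rightarrow> real"
  assumes "continuous_on UNIV g" "strict_mono_on {a<..<b} g" "0 < \<epsilon>" "a < s - \<epsilon>" "t + \<epsilon> < b" "s < t"
  shows "mol \<phi> \<epsilon> g s < mol \<phi> \<epsilon> g t"
proof -
  let ?h = "\<lambda>u. g (t - u) - g (s - u)"
  have hc: "continuous_on {-\<epsilon>..\<epsilon>} ?h"
    by (intro continuous_intros continuous_on_compose2[OF assms(1)]) auto
  obtain u0 where u0: "u0 \<in> {-\<epsilon>..\<epsilon>}" "\<And>u. u \<in> {-\<epsilon>..\<epsilon>} \<Longrightarrow> ?h u0 \<le> ?h u"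
    using continuous_attains_inf[OF compact_Icc _ hc] assms(3) by fastforce
  have pos: "?h u > 0" if "u \<in> {-\<epsilon>..\<epsilon>}" for u
  proof -
    have "s - u \<in> {a<..<b}" "t - u \<in> {a<..<b}" "s - u < t - u" using that assms by auto
    then show ?thesis using assms(2) unfolding monotone_on_def by auto
  qed
  have "?h u0 \<le> mol \<phi> \<epsilon> g t - mol \<phi> \<epsilon> g s"
    by (rule mol_lower[OF phc phpos phsupp phint assms(3,1,1)]) (use u0 in auto)
  then show ?thesis using pos[OF u0(1)] by simp
qed

lemma mol_wmono:
  fixes g :: "real \<Rightarrow> real"
  assumes "continuous_on UNIV g" "strict_mono_on {a<..<b} g" "0 < \<epsilon>" "a < s - \<epsilon>" "t + \<epsilon> < b" "s \<le> t"
  shows "mol \<phi> \<epsilon> g s \<le> mol \<phi> \<epsilon> g t"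
  using mol_smono[OF assms(1-5)] assms(6) by (cases "s = t") auto

end


context moll
begin

lemma tri4:
  fixes X x x0 Y y y0 :: real
  assumes "\<bar>X - x\<bar> \<le> e1" "\<bar>x - x0\<bar> < e2" "\<bar>Y - y\<bar> \<le> e3" "\<bar>y - y0\<bar> < e4" "m < \<bar>x0 - y0\<bar>"
  shows "m - e1 - e2 - e3 - e4 \<le> \<bar>X - Y\<bar>"
  using assms by linarith

lemma g_bdd: "bounded (range \<gamma>)" by (rule periodic_bounded[OF gc Tpos gper])

lemma muat_ge: "mu_K K \<gamma> \<le> mu_K_at K \<gamma> \<theta>"
proof -
  have nn: "mu_K_at K \<gamma> x \<ge> 0" for x
  proof -
    obtain v a b where p: "lg_pair K \<gamma> x v a b" using glg unfolding locally_lipschitz_graphical_def by blast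
    have "mu_pair \<gamma> x v a b \<le> mu_K_at K \<gamma> x"
      unfolding mu_K_at_def by (rule cSup_upper[OF _ mu_bdd[OF g_bdd]]) (use p in blast)
    then show ?thesis using mu_pair_nonneg[of \<gamma> x v a b] by linarith
  qed
  show ?thesis unfolding mu_K_def
    by (rule cInf_lower) (use nn in \<open>auto intro!: bdd_belowI[where m=0]\<close>)
qed

lemma loc:
  assumes dpos: "\<delta> > 0"
  shows "\<exists>r>0. \<exists>e0>0. \<forall>\<epsilon>. 0 < \<epsilon> \<and> \<epsilon> < e0 \<longrightarrow> (\<forall>\<theta>. \<bar>\<theta> - \<theta>0\<bar> < r \<longrightarrow>
     (\<exists>v a b. lg_pair K (mollify \<phi> \<epsilon> \<gamma>) \<theta> v a b \<and> strict_mono_on {a<..<b} (gv (mollify \<phi> \<epsilon> \<gamma>) v) \<and>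
        mu_K K \<gamma> - \<delta> \<le> mu_pair (mollify \<phi> \<epsilon> \<gamma>) \<theta> v a b \<and> a \<le> \<theta> - r \<and> \<theta> + r \<le> b))"
proof -
  let ?\<mu> = "mu_K K \<gamma>"
  let ?S = "{mu_pair \<gamma> \<theta>0 v a b | v a b. lg_pair K \<gamma> \<theta>0 v a b}"
  have ne: "?S \<noteq> {}" using glg unfolding locally_lipschitz_graphical_def by blast
  have "?\<mu> - \<delta>/2 < Sup ?S" using muat_ge[of \<theta>0] dpos unfolding mu_K_at_def by linarith
  then obtain v0 a b where p0: "lg_pair K \<gamma> \<theta>0 v0 a b" "?\<mu> - \<delta>/2 < mu_pair \<gamma> \<theta>0 v0 a b"
    using less_cSup_iff[OF ne mu_bdd[OF g_bdd]] by blast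
  obtain v where p: "lg_pair K \<gamma> \<theta>0 v a b" and sm: "strict_mono_on {a<..<b} (gv \<gamma> v)"
    and mu: "?\<mu> - \<delta>/2 < mu_pair \<gamma> \<theta>0 v a b"
    using lg_pair_flip[OF p0(1)] p0(2) by metis
  note D = lg_pair_D[OF p]
  define g where "g = gv \<gamma> v"
  have gcont: "continuous_on UNIV g" unfolding g_def by (rule gv_cont)
  have cont_at: "\<exists>d>0. \<forall>y. \<bar>y - x\<bar> < d \<longrightarrow> \<bar>g y - g x\<bar> < \<delta>/8" for x
    using gcont[unfolded continuous_on_iff] dpos unfolding dist_real_def
    by (metis UNIV_I zero_less_divide_iff zero_less_numeral)
  obtain \<eta>1 where e1: "\<eta>1 > 0" "\<And>y. \<bar>y - a\<bar> < \<eta>1 \<Longrightarrow> \<bar>g y - g a\<bar> < \<delta>/8" using cont_at by blast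
  obtain \<eta>2 where e2: "\<eta>2 > 0" "\<And>y. \<bar>y - b\<bar> < \<eta>2 \<Longrightarrow> \<bar>g y - g b\<bar> < \<delta>/8" using cont_at by blast
  obtain \<eta>3 where e3: "\<eta>3 > 0" "\<And>y. \<bar>y - \<theta>0\<bar> < \<eta>3 \<Longrightarrow> \<bar>g y - g \<theta>0\<bar> < \<delta>/8" using cont_at by blast
  define \<eta> where "\<eta> = min (\<eta>1/2) (min (\<eta>2/2) (min ((\<theta>0-a)/4) ((b-\<theta>0)/4)))"
  have \<eta>pos: "\<eta> > 0" unfolding \<eta>_def using e1 e2 D by auto
  define r where "r = min \<eta> \<eta>3"
  have rpos: "r > 0" unfolding r_def using \<eta>pos e3 by auto
  obtain d where d: "d > 0" "\<And>\<epsilon> s. 0 < \<epsilon> \<Longrightarrow> \<epsilon> < d \<Longrightarrow> norm (mollify \<phi> \<epsilon> \<gamma> s - \<gamma> s) \<le> \<delta>/16"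
    using Gam_close[of "\<delta>/16"] dpos by auto
  define e0 where "e0 = min \<eta> d"
  have e0pos: "e0 > 0" unfolding e0_def using \<eta>pos d by auto
  have ga: "\<bar>g (a + \<eta>) - g a\<bar> < \<delta>/8" using e1(2)[of "a+\<eta>"] \<eta>pos unfolding \<eta>_def by auto
  have gb: "\<bar>g (b - \<eta>) - g b\<bar> < \<delta>/8" using e2(2)[of "b-\<eta>"] \<eta>pos unfolding \<eta>_def by auto
  have mua: "\<bar>g \<theta>0 - g a\<bar> > ?\<mu> - \<delta>/2" and mub: "\<bar>g \<theta>0 - g b\<bar> > ?\<mu> - \<delta>/2"
    using mu unfolding mu_pair_def g_def by auto
  have \<eta>le: "\<eta> \<le> (\<theta>0-a)/4" "\<eta> \<le> (b-\<theta>0)/4" unfolding \<eta>_def min_def by auto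
  show ?thesis
  proof (rule exI[of _ r], intro conjI rpos, rule exI[of _ e0], intro conjI e0pos allI impI)
    fix \<epsilon> \<theta> assume eps: "0 < \<epsilon> \<and> \<epsilon> < e0" and th: "\<bar>\<theta> - \<theta>0\<bar> < r"
    have epos: "\<epsilon> > 0" and e\<eta>: "\<epsilon> < \<eta>" and ed: "\<epsilon> < d" using eps unfolding e0_def by auto
    let ?G = "mollify \<phi> \<epsilon> \<gamma>"
    have gG: "gv ?G v = mol \<phi> \<epsilon> g" unfolding g_def by (rule ext) (rule gv_Gam[OF epos])
    have fG: "fv ?G v = mol \<phi> \<epsilon> (fv \<gamma> v)" by (rule ext) (rule fv_Gam[OF epos])
    have close: "\<bar>mol \<phi> \<epsilon> g s - g s\<bar> \<le> \<delta>/16" for s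
    proof -
      have "\<bar>mol \<phi> \<epsilon> g s - g s\<bar> = \<bar>(?G s - \<gamma> s) \<bullet> v\<bar>"
        using gG unfolding g_def gv_def by (metis inner_diff_left)
      also have "\<dots> \<le> norm (?G s - \<gamma> s) * norm v" by (rule Cauchy_Schwarz_ineq2)
      also have "\<dots> \<le> \<delta>/16" using d(2)[OF epos ed, of s] D(1) by simp
      finally show ?thesis .
    qed
    have thr: "\<theta> - r > a + \<eta>" "\<theta> + r < b - \<eta>" "\<bar>\<theta> - \<theta>0\<bar> < \<eta>3"
      using th \<eta>le unfolding r_def by auto
    have smG: "strict_mono_on {a+\<eta><..<b-\<eta>} (gv ?G v)"
      unfolding gG monotone_on_def
    proof (intro ballI impI)
      fix s t assume "s \<in> {a+\<eta><..<b-\<eta>}" "t \<in> {a+\<eta><..<b-\<eta>}" "s < t"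
      then show "mol \<phi> \<epsilon> g s < mol \<phi> \<epsilon> g t"
        using mol_smono[OF gcont sm[folded g_def] epos] e\<eta> by auto
    qed
    have lip: "\<bar>fv ?G v s - fv ?G v t\<bar> \<le> K * \<bar>gv ?G v s - gv ?G v t\<bar>"
      if st: "s \<in> {a+\<eta><..<b-\<eta>}" "t \<in> {a+\<eta><..<b-\<eta>}" "s \<le> t" for s t
    proof -
      have "\<bar>mol \<phi> \<epsilon> (fv \<gamma> v) s - mol \<phi> \<epsilon> (fv \<gamma> v) t\<bar> \<le> K * (mol \<phi> \<epsilon> g t - mol \<phi> \<epsilon> g s)"
      proof (rule mol_lip[OF phc phpos phsupp phint epos fv_cont gcont])
        fix u assume u: "u \<in> {-\<epsilon>..\<epsilon>}"
        have su: "s - u \<in> {a<..<b}" "t - u \<in> {a<..<b}" "s - u \<le> t - u" using u st e\<eta> by auto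
        have "g (s - u) \<le> g (t - u)"
        proof (cases "s = t")
          case False
          then have lt: "s - u < t - u" using su(3) by auto
          have "\<forall>x\<in>{a<..<b}. \<forall>y\<in>{a<..<b}. x < y \<longrightarrow> g x < g y" using sm unfolding g_def monotone_on_def .
          then show ?thesis using su(1,2) lt by (meson less_imp_le)
        qed simp
        then show "\<bar>fv \<gamma> v (s - u) - fv \<gamma> v (t - u)\<bar> \<le> K * (g (t - u) - g (s - u))"
          using D(6)[OF su(1,2)] unfolding g_def by simp
      qed
      moreover have "mol \<phi> \<epsilon> g s \<le> mol \<phi> \<epsilon> g t"
        using mol_wmono[OF gcont sm[folded g_def] epos] st e\<eta> by auto
      ultimately show ?thesis unfolding fG gG by simp
    qed
    have pair: "lg_pair K ?G \<theta> v (a+\<eta>) (b-\<eta>)"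
    proof (rule lg_pair_I[OF D(1) _ _ D(4) smG])
      show "a + \<eta> < \<theta>" "\<theta> < b - \<eta>" using thr rpos by auto
      fix s t assume "s \<in> {a+\<eta><..<b-\<eta>}" "t \<in> {a+\<eta><..<b-\<eta>}"
      then show "\<bar>fv ?G v s - fv ?G v t\<bar> \<le> K * \<bar>gv ?G v s - gv ?G v t\<bar>"
        using lip[of s t] lip[of t s] by (cases "s \<le> t") (auto simp: abs_minus_commute)
    qed
    have gth: "\<bar>g \<theta> - g \<theta>0\<bar> < \<delta>/8" using e3(2) thr(3) by auto
    have c1: "\<bar>mol \<phi> \<epsilon> g \<theta> - g \<theta>\<bar> \<le> \<delta>/16" "\<bar>mol \<phi> \<epsilon> g (a+\<eta>) - g (a+\<eta>)\<bar> \<le> \<delta>/16"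
      "\<bar>mol \<phi> \<epsilon> g (b-\<eta>) - g (b-\<eta>)\<bar> \<le> \<delta>/16" using close by auto
    have "?\<mu> - \<delta> \<le> mu_pair ?G \<theta> v (a+\<eta>) (b-\<eta>)"
      unfolding mu_pair_def gG
      by (rule min.boundedI) (use tri4[OF c1(1) gth c1(2) ga mua] tri4[OF c1(1) gth c1(3) gb mub] dpos in linarith)+
    then show "\<exists>v a b. lg_pair K ?G \<theta> v a b \<and> strict_mono_on {a<..<b} (gv ?G v) \<and>
        ?\<mu> - \<delta> \<le> mu_pair ?G \<theta> v a b \<and> a \<le> \<theta> - r \<and> \<theta> + r \<le> b"
      using pair smG thr by (intro exI[of _ v] exI[of _ "a+\<eta>"] exI[of _ "b-\<eta>"]) auto
  qed
qed

end


context moll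
begin

lemma Gam_per_int: "\<epsilon> > 0 \<Longrightarrow> mollify \<phi> \<epsilon> \<gamma> (s + of_int k * T) = mollify \<phi> \<epsilon> \<gamma> s"
  by (rule periodic_int[of "mollify \<phi> \<epsilon> \<gamma>" T]) (rule Gam_per)

lemma unif:
  assumes dpos: "\<delta> > 0"
  shows "\<exists>\<rho>>0. \<exists>e0>0. \<forall>\<epsilon>. 0 < \<epsilon> \<and> \<epsilon> < e0 \<longrightarrow> (\<forall>\<theta>.
     (\<exists>v a b. lg_pair K (mollify \<phi> \<epsilon> \<gamma>) \<theta> v a b \<and> strict_mono_on {a<..<b} (gv (mollify \<phi> \<epsilon> \<gamma>) v) \<and>
        mu_K K \<gamma> - \<delta> \<le> mu_pair (mollify \<phi> \<epsilon> \<gamma>) \<theta> v a b \<and> a \<le> \<theta> - \<rho> \<and> \<theta> + \<rho> \<le> b))"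
proof -
  let ?P = "\<lambda>\<epsilon> \<theta> r. \<exists>v a b. lg_pair K (mollify \<phi> \<epsilon> \<gamma>) \<theta> v a b \<and> strict_mono_on {a<..<b} (gv (mollify \<phi> \<epsilon> \<gamma>) v) \<and>
        mu_K K \<gamma> - \<delta> \<le> mu_pair (mollify \<phi> \<epsilon> \<gamma>) \<theta> v a b \<and> a \<le> \<theta> - r \<and> \<theta> + r \<le> b"
  have "\<forall>\<theta>0. \<exists>r. r > 0 \<and> (\<exists>e0>0. \<forall>\<epsilon>. 0 < \<epsilon> \<and> \<epsilon> < e0 \<longrightarrow> (\<forall>\<theta>. \<bar>\<theta> - \<theta>0\<bar> < r \<longrightarrow> ?P \<epsilon> \<theta> r))"
    using loc[OF dpos] by blast
  then obtain R where "\<forall>\<theta>0. R \<theta>0 > 0 \<and> (\<exists>e0>0. \<forall>\<epsilon>. 0 < \<epsilon> \<and> \<epsilon> < e0 \<longrightarrow> (\<forall>\<theta>. \<bar>\<theta> - \<theta>0\<bar> < R \<theta>0 \<longrightarrow> ?P \<epsilon> \<theta> (R \<theta>0)))"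
    by metis
  then obtain E where RE: "\<And>\<theta>0. R \<theta>0 > 0" "\<And>\<theta>0. E \<theta>0 > 0"
    "\<And>\<theta>0 \<epsilon> \<theta>. 0 < \<epsilon> \<Longrightarrow> \<epsilon> < E \<theta>0 \<Longrightarrow> \<bar>\<theta> - \<theta>0\<bar> < R \<theta>0 \<Longrightarrow> ?P \<epsilon> \<theta> (R \<theta>0)"
    by metis
  have cov: "{0..T} \<subseteq> (\<Union>c\<in>{0..T}. ball c (R c))" using RE(1) by force
  obtain C where C: "C \<subseteq> {0..T}" "finite C" "{0..T} \<subseteq> (\<Union>c\<in>C. ball c (R c))"
    using compactE_image[OF compact_Icc _ cov] by blast
  have Cne: "C \<noteq> {}" using C(3) Tpos by auto
  define \<rho> where "\<rho> = Min (R ` C)"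
  define e0 where "e0 = Min (E ` C)"
  have \<rho>pos: "\<rho> > 0" unfolding \<rho>_def using C(2) Cne RE(1) by auto
  have e0pos: "e0 > 0" unfolding e0_def using C(2) Cne RE(2) by auto
  have \<rho>le: "\<rho> \<le> R c" if "c \<in> C" for c unfolding \<rho>_def using C(2) that by auto
  have e0le: "e0 \<le> E c" if "c \<in> C" for c unfolding e0_def using C(2) that by auto
  show ?thesis
  proof (rule exI[of _ \<rho>], intro conjI \<rho>pos, rule exI[of _ e0], intro conjI e0pos allI impI)
    fix \<epsilon> \<theta> assume eps: "0 < \<epsilon> \<and> \<epsilon> < e0"
    then have epos: "\<epsilon> > 0" by auto
    obtain k \<theta>' where th: "\<theta> = \<theta>' + of_int k * T" "0 \<le> \<theta>'" "\<theta>' < T" using periodic_reduce[OF Tpos] .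
    obtain c where c: "c \<in> C" "\<theta>' \<in> ball c (R c)" using C(3) th by force
    have "?P \<epsilon> \<theta>' (R c)"
      by (rule RE(3)) (use eps e0le[OF c(1)] c(2) in \<open>auto simp: dist_real_def abs_minus_commute\<close>)
    then obtain v a b where p: "lg_pair K (mollify \<phi> \<epsilon> \<gamma>) \<theta>' v a b" "strict_mono_on {a<..<b} (gv (mollify \<phi> \<epsilon> \<gamma>) v)"
      "mu_K K \<gamma> - \<delta> \<le> mu_pair (mollify \<phi> \<epsilon> \<gamma>) \<theta>' v a b" "a \<le> \<theta>' - R c" "\<theta>' + R c \<le> b" by blast
    note S = lg_pair_shift[OF p(1,2) Gam_per_int[OF epos, of _ k]]
    show "?P \<epsilon> \<theta> \<rho>"
      using S p(3-5) \<rho>le[OF c(1)] th(1)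
      by (intro exI[of _ v] exI[of _ "a + of_int k * T"] exI[of _ "b + of_int k * T"]) auto
  qed
qed

lemma far:
  assumes "\<rho> > 0"
  shows "\<exists>c>0. \<forall>s t. 0 \<le> s \<and> s \<le> T \<and> 0 \<le> t \<and> t \<le> T \<and> \<rho> \<le> t - s \<and> t - s \<le> T - \<rho> \<longrightarrow> c \<le> dist (\<gamma> s) (\<gamma> t)"
proof -
  define S where "S = ({0..T} \<times> {0..T}) \<inter> {p. \<rho> \<le> snd p - fst p} \<inter> {p::real\<times>real. snd p - fst p \<le> T - \<rho>}"
  show ?thesis
  proof (cases "S = {}")
    case True
    show ?thesis
    proof (intro exI[of _ 1] conjI allI impI)
      fix s t assume "0 \<le> s \<and> s \<le> T \<and> 0 \<le> t \<and> t \<le> T \<and> \<rho> \<le> t - s \<and> t - s \<le> T - \<rho>"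
      then have "(s, t) \<in> S" unfolding S_def by auto
      then show "1 \<le> dist (\<gamma> s) (\<gamma> t)" using True by auto
    qed simp
  next
    case False
    have cl1: "closed {p::real\<times>real. \<rho> \<le> snd p - fst p}"
      by (rule closed_Collect_le) (auto intro!: continuous_intros)
    have cl2: "closed {p::real\<times>real. snd p - fst p \<le> T - \<rho>}"
      by (rule closed_Collect_le) (auto intro!: continuous_intros)
    have cS: "compact S" unfolding S_def
      by (intro compact_Int_closed closed_Int cl1 cl2 compact_Times compact_Icc)
    have cont: "continuous_on S (\<lambda>p. dist (\<gamma> (fst p)) (\<gamma> (snd p)))"
      by (intro continuous_intros continuous_on_compose2[OF gc]) auto
    obtain p0 where p0: "p0 \<in> S" "\<And>p. p \<in> S \<Longrightarrow> dist (\<gamma> (fst p0)) (\<gamma> (snd p0)) \<le> dist (\<gamma> (fst p)) (\<gamma> (snd p))"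
      using continuous_attains_inf[OF cS False cont] by blast
    obtain s0 t0 where st0: "p0 = (s0, t0)" by (cases p0)
    have h: "0 \<le> s0" "s0 \<le> T" "0 \<le> t0" "t0 \<le> T" "\<rho> \<le> t0 - s0" "t0 - s0 \<le> T - \<rho>"
      using p0(1) unfolding S_def st0 by auto
    have "\<gamma> s0 \<noteq> \<gamma> t0"
    proof (cases "t0 < T")
      case True
      then show ?thesis using ginj h assms unfolding inj_on_def by force
    next
      case False
      then have "t0 = T" using h by auto
      then have "\<gamma> t0 = \<gamma> 0" using gper[of 0] by simp
      moreover have "\<gamma> s0 \<noteq> \<gamma> 0" using ginj h assms \<open>t0 = T\<close> unfolding inj_on_def by force
      ultimately show ?thesis by simp
    qed
    then have pos: "dist (\<gamma> s0) (\<gamma> t0) > 0" by simp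
    show ?thesis
    proof (intro exI[of _ "dist (\<gamma> s0) (\<gamma> t0)"] conjI pos allI impI)
      fix s t assume "0 \<le> s \<and> s \<le> T \<and> 0 \<le> t \<and> t \<le> T \<and> \<rho> \<le> t - s \<and> t - s \<le> T - \<rho>"
      then have "(s, t) \<in> S" unfolding S_def by auto
      from p0(2)[OF this] show "dist (\<gamma> s0) (\<gamma> t0) \<le> dist (\<gamma> s) (\<gamma> t)" using st0 by simp
    qed
  qed
qed

end


context moll
begin

lemma main1: "\<forall>\<^sub>F \<epsilon> in at_right 0. jordan_curve (mollify \<phi> \<epsilon> \<gamma>) \<and> locally_lipschitz_graphical K (mollify \<phi> \<epsilon> \<gamma>)"
proof -
  obtain \<rho> e0 where \<rho>: "\<rho> > 0" "e0 > 0" and U: "\<And>\<epsilon> \<theta>. 0 < \<epsilon> \<Longrightarrow> \<epsilon> < e0 \<Longrightarrow>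
     (\<exists>v a b. lg_pair K (mollify \<phi> \<epsilon> \<gamma>) \<theta> v a b \<and> strict_mono_on {a<..<b} (gv (mollify \<phi> \<epsilon> \<gamma>) v) \<and>
        mu_K K \<gamma> - 1 \<le> mu_pair (mollify \<phi> \<epsilon> \<gamma>) \<theta> v a b \<and> a \<le> \<theta> - \<rho> \<and> \<theta> + \<rho> \<le> b)"
    using unif[of 1] by auto
  obtain c where c: "c > 0" "\<And>s t. 0 \<le> s \<Longrightarrow> s \<le> T \<Longrightarrow> 0 \<le> t \<Longrightarrow> t \<le> T \<Longrightarrow> \<rho> \<le> t - s \<Longrightarrow> t - s \<le> T - \<rho> \<Longrightarrow> c \<le> dist (\<gamma> s) (\<gamma> t)"
    using far[OF \<rho>(1)] by blast
  obtain d1 where d1: "d1 > 0" "\<And>\<epsilon> s. 0 < \<epsilon> \<Longrightarrow> \<epsilon> < d1 \<Longrightarrow> norm (mollify \<phi> \<epsilon> \<gamma> s - \<gamma> s) \<le> c/4"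
    using Gam_close[of "c/4"] c(1) by auto
  have P: "jordan_curve (mollify \<phi> \<epsilon> \<gamma>) \<and> locally_lipschitz_graphical K (mollify \<phi> \<epsilon> \<gamma>)"
    if eps: "0 < \<epsilon>" "\<epsilon> < e0" "\<epsilon> < d1" for \<epsilon>
  proof -
    let ?G = "mollify \<phi> \<epsilon> \<gamma>"
    have llg: "locally_lipschitz_graphical K ?G"
      unfolding locally_lipschitz_graphical_def using U[OF eps(1,2)] by blast
    have neq: "?G s \<noteq> ?G t" if st: "0 \<le> s" "s < t" "t < T" for s t
    proof -
      consider "t - s < \<rho>" | "t - s > T - \<rho>" | "\<rho> \<le> t - s \<and> t - s \<le> T - \<rho>" by linarith
      then show ?thesis
      proof cases
        case 1
        obtain v a b where p: "lg_pair K ?G s v a b" "strict_mono_on {a<..<b} (gv ?G v)" "a \<le> s - \<rho>" "s + \<rho> \<le> b"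
          using U[OF eps(1,2), of s] by blast
        have "s \<in> {a<..<b}" "t \<in> {a<..<b}" using lg_pair_D(2,3)[OF p(1)] p(3,4) 1 st by auto
        then have "gv ?G v s < gv ?G v t" using p(2) st(2) unfolding monotone_on_def by blast
        then show ?thesis unfolding gv_def by auto
      next
        case 2
        obtain v a b where p: "lg_pair K ?G t v a b" "strict_mono_on {a<..<b} (gv ?G v)" "a \<le> t - \<rho>" "t + \<rho> \<le> b"
          using U[OF eps(1,2), of t] by blast
        have "t \<in> {a<..<b}" "s + T \<in> {a<..<b}" using lg_pair_D(2,3)[OF p(1)] p(3,4) 2 st by auto
        then have "gv ?G v t < gv ?G v (s + T)" using p(2) st unfolding monotone_on_def by auto
        then show ?thesis unfolding gv_def Gam_per[OF eps(1)] by auto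
      next
        case 3
        have "c \<le> dist (\<gamma> s) (\<gamma> t)" using c(2)[of s t] 3 st by auto
        moreover have "norm (?G s - \<gamma> s) \<le> c/4" "norm (?G t - \<gamma> t) \<le> c/4" using d1(2)[OF eps(1,3)] by auto
        moreover have "norm (\<gamma> s - \<gamma> t) \<le> norm (?G s - ?G t) + norm (?G s - \<gamma> s) + norm (?G t - \<gamma> t)"
        proof -
          have e: "\<gamma> s - \<gamma> t = ((?G s - ?G t) - (?G s - \<gamma> s)) + (?G t - \<gamma> t)" by simp
          have "norm (\<gamma> s - \<gamma> t) \<le> norm ((?G s - ?G t) - (?G s - \<gamma> s)) + norm (?G t - \<gamma> t)"
            unfolding e by (rule norm_triangle_ineq)
          also have "\<dots> \<le> norm (?G s - ?G t) + norm (?G s - \<gamma> s) + norm (?G t - \<gamma> t)"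
            using norm_triangle_ineq4[of "?G s - ?G t" "?G s - \<gamma> s"] by linarith
          finally show ?thesis .
        qed
        ultimately show ?thesis using c(1) by (auto simp: dist_norm)
      qed
    qed
    have inj: "inj_on ?G {0..<T}"
    proof (rule inj_onI, rule ccontr)
      fix s t assume st: "s \<in> {0..<T}" "t \<in> {0..<T}" "?G s = ?G t" "s \<noteq> t"
      then show False using neq[of s t] neq[of t s] by (cases "s < t") auto
    qed
    have "jordan_curve ?G" unfolding jordan_curve_def
      using Gam_cont[OF eps(1)] Tpos Gam_per[OF eps(1)] inj by blast
    with llg show ?thesis by blast
  qed
  show ?thesis unfolding eventually_at_right_field
    using P \<rho>(2) d1(1) by (intro exI[of _ "min e0 d1"]) auto
qed

lemma main2: "Liminf (at_right 0) (\<lambda>\<epsilon>. ereal (mu_K K (mollify \<phi> \<epsilon> \<gamma>))) \<ge> ereal (mu_K K \<gamma>)"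
  unfolding le_Liminf_iff
proof (intro allI impI)
  fix y assume y: "y < ereal (mu_K K \<gamma>)"
  show "\<forall>\<^sub>F \<epsilon> in at_right 0. y < ereal (mu_K K (mollify \<phi> \<epsilon> \<gamma>))"
  proof (cases y)
    case (real r)
    define \<delta> where "\<delta> = (mu_K K \<gamma> - r) / 2"
    have dpos: "\<delta> > 0" using y real unfolding \<delta>_def by auto
    obtain \<rho> e0 where \<rho>: "\<rho> > 0" "e0 > 0" and U: "\<And>\<epsilon> \<theta>. 0 < \<epsilon> \<Longrightarrow> \<epsilon> < e0 \<Longrightarrow>
       (\<exists>v a b. lg_pair K (mollify \<phi> \<epsilon> \<gamma>) \<theta> v a b \<and> strict_mono_on {a<..<b} (gv (mollify \<phi> \<epsilon> \<gamma>) v) \<and>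
          mu_K K \<gamma> - \<delta> \<le> mu_pair (mollify \<phi> \<epsilon> \<gamma>) \<theta> v a b \<and> a \<le> \<theta> - \<rho> \<and> \<theta> + \<rho> \<le> b)"
      using unif[OF dpos] by auto
    have Q: "mu_K K \<gamma> - \<delta> \<le> mu_K K (mollify \<phi> \<epsilon> \<gamma>)" if eps: "0 < \<epsilon>" "\<epsilon> < e0" for \<epsilon>
      unfolding mu_K_def[of K "mollify \<phi> \<epsilon> \<gamma>"]
    proof (rule cInf_greatest)
      show "range (mu_K_at K (mollify \<phi> \<epsilon> \<gamma>)) \<noteq> {}" by simp
      fix x assume "x \<in> range (mu_K_at K (mollify \<phi> \<epsilon> \<gamma>))"
      then obtain \<theta> where x: "x = mu_K_at K (mollify \<phi> \<epsilon> \<gamma>) \<theta>" by auto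
      obtain v a b where p: "lg_pair K (mollify \<phi> \<epsilon> \<gamma>) \<theta> v a b" "mu_K K \<gamma> - \<delta> \<le> mu_pair (mollify \<phi> \<epsilon> \<gamma>) \<theta> v a b"
        using U[OF eps] by blast
      have "mu_pair (mollify \<phi> \<epsilon> \<gamma>) \<theta> v a b \<le> x"
        unfolding x mu_K_at_def by (rule cSup_upper[OF _ mu_bdd[OF Gam_bounded[OF eps(1)]]]) (use p in blast)
      then show "mu_K K \<gamma> - \<delta> \<le> x" using p(2) by linarith
    qed
    show ?thesis unfolding eventually_at_right_field real
    proof (intro exI[of _ e0] conjI \<rho>(2) allI impI)
      fix \<epsilon> :: real assume "0 < \<epsilon>" "\<epsilon> < e0"
      then have "mu_K K \<gamma> - \<delta> \<le> mu_K K (mollify \<phi> \<epsilon> \<gamma>)" by (rule Q)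
      moreover have "r < mu_K K \<gamma> - \<delta>" using dpos unfolding \<delta>_def by (simp add: field_simps)
      ultimately have "r < mu_K K (mollify \<phi> \<epsilon> \<gamma>)" by linarith
      then show "ereal r < ereal (mu_K K (mollify \<phi> \<epsilon> \<gamma>))" by simp
    qed
  next
    case PInf then show ?thesis using y by simp
  next
    case MInf then show ?thesis by simp
  qed
qed

end

theorem lemma4p3:
  fixes \<gamma> :: "real \<Rightarrow> complex" and \<phi> :: "real \<Rightarrow> real" and K :: real
  assumes "jordan_curve \<gamma>"
    and "locally_lipschitz_graphical K \<gamma>"
    and "smooth_fun \<phi>"
    and "\<And>u. \<phi> u \<ge> 0"
    and "\<And>u. \<bar>u\<bar> > 1 \<Longrightarrow> \<phi> u = 0"
    and "(\<phi> has_integral 1) UNIV"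
  shows "(\<forall>\<^sub>F \<epsilon> in at_right 0. jordan_curve (mollify \<phi> \<epsilon> \<gamma>) \<and>
              locally_lipschitz_graphical K (mollify \<phi> \<epsilon> \<gamma>))
       \<and> Liminf (at_right 0) (\<lambda>\<epsilon>. ereal (mu_K K (mollify \<phi> \<epsilon> \<gamma>))) \<ge> ereal (mu_K K \<gamma>)"
proof -
  obtain D where D: "D 0 = \<phi>" "\<And>n x. (D n has_real_derivative D (Suc n) x) (at x)"
    using assms(3) unfolding smooth_fun_def by blast
  have phc: "continuous_on UNIV \<phi>"
    by (rule continuous_at_imp_continuous_on) (use D in \<open>metis DERIV_isCont\<close>)
  obtain T where T: "T > 0" "\<And>s. \<gamma> (s + T) = \<gamma> s" "inj_on \<gamma> {0..<T}" and gc: "continuous_on UNIV \<gamma>"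
    using assms(1) unfolding jordan_curve_def by blast
  interpret M: moll \<phi> \<gamma> T K
    by (unfold_locales) (use phc assms T gc in auto)
  show ?thesis using M.main1 M.main2 by blast
qed

end
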